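(* Let $X$ be any real random variable, and let $s_1,s_2$ be real numbers with $s_1\le 0\le s_2$ such that $\mathsf{E}\, e^{sX}<\infty$ for all $s\in[s_1,s_2]$. Let $p\in\mathbb{N}$ with $\mathsf{E}|X|^p<\infty$, and let $\ell:=p-1$. Then for any $s\in[s_1,0)$ and any $j\in\{-1,0,\dots,\ell\}$, \[ \mathsf{E}\, X_+^p=\mathsf{E}\, X^p+\frac{p!}{2\pi}\int_{-\infty}^{\infty}\frac{\mathsf{E}\, e_j\big((s+it)X\big)}{(s+it)^{p+1}}\,dt =\mathsf{E}\, X^p+\frac{p!}{\pi}\int_{0}^{\infty}\operatorname{Re}\frac{\mathsf{E}\, e_j\big((s+it)X\big)}{(s+it)^{p+1}}\,dt, \] where the integrals exist in the Lebesgue sense.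
   Context: $x_+:=\max(0,x)$, $x_+^p:=(x_+)^p$. For complex $z$ and $m\in\{-1,0,1,\dots\}$, $e_m(z):=e^z-\sum_{j=0}^m z^j/j!$ (an empty sum is $0$, so $e_{-1}(z)=e^z$). The statement of the identity includes the assertion that the integrals exist in the Lebesgue sense (possibly infinite). *)

theory Defs
  imports "HOL-Probability.Probability"
begin

text \<open>Truncated exponential: e_m(z) = exp z - sum_{k=0}^{m} z^k/k!, for integer m \<ge> -1
  (for m = -1 the sum is empty, so e_{-1} = exp).\<close>
definition exp_trunc :: "int \<Rightarrow> complex \<Rightarrow> complex" where
  "exp_trunc m z = exp z - (\<Sum>k<nat (m + 1). z ^ k / of_nat (fact k))"

end

theory Submission
  imports Defs "HOL-Complex_Analysis.Complex_Analysis" "HOL-Real_Asymp.Real_Asymp"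
begin

lemma Complex_cont: "continuous_on A (\<lambda>t. Complex s t)"
  unfolding Complex_eq by (intro continuous_intros)

lemma norm_Complex_sq: "norm (Complex s t) ^ 2 = s^2 + t^2"
  by (simp add: cmod_def)

lemma norm_Complex_ge: "\<bar>s\<bar> \<le> norm (Complex s t)" "\<bar>t\<bar> \<le> norm (Complex s t)"
  using abs_Re_le_cmod[of "Complex s t"] abs_Im_le_cmod[of "Complex s t"] by auto

lemma Complex_nz: "s \<noteq> 0 \<Longrightarrow> Complex s t \<noteq> 0"
  by (simp add: complex_eq_iff)

lemma inv_sq_integrable:
  assumes "\<sigma> \<noteq> 0"
  shows "integrable lborel (\<lambda>t. 1 / (\<sigma>^2 + t^2))"
    and "(\<integral>t. 1 / (\<sigma>^2 + t^2) \<partial>lborel) = pi / \<bar>\<sigma>\<bar>"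
proof -
  let ?f = "\<lambda>x::real. inverse (1 + x^2)"
  have i1: "integrable lborel ?f"
    using integrable_inverse_1_plus_square by (simp add: set_integrable_def)
  have v1: "(\<integral>x. ?f x \<partial>lborel) = pi"
    using LBINT_inverse_1_plus_square
    by (simp add: interval_lebesgue_integral_def set_lebesgue_integral_def)
  have c: "1 / \<bar>\<sigma>\<bar> \<noteq> 0" using assms by simp
  have i2: "integrable lborel (\<lambda>t. ?f (0 + (1/\<bar>\<sigma>\<bar>) * t))"
    using lborel_integrable_real_affine[OF i1 c] .
  have eq: "?f (0 + (1/\<bar>\<sigma>\<bar>) * t) = \<sigma>^2 * (1 / (\<sigma>^2 + t^2))" for t
    using assms by (simp add: field_simps power2_eq_square abs_mult_self_eq)
  show "integrable lborel (\<lambda>t. 1 / (\<sigma>^2 + t^2))"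
    using i2 assms unfolding eq by (simp only: integrable_mult_left_iff) simp
  have "pi = \<bar>1 / \<bar>\<sigma>\<bar>\<bar> * (\<integral>t. ?f (0 + (1/\<bar>\<sigma>\<bar>) * t) \<partial>lborel)"
    using lborel_integral_real_affine[OF c, of ?f 0] v1 by simp
  also have "\<dots> = (1/\<bar>\<sigma>\<bar>) * \<sigma>^2 * (\<integral>t. 1 / (\<sigma>^2 + t^2) \<partial>lborel)"
    unfolding eq by (simp only: integral_mult_right_zero) simp
  finally have e: "pi = (1/\<bar>\<sigma>\<bar>) * \<sigma>^2 * (\<integral>t. 1 / (\<sigma>^2 + t^2) \<partial>lborel)" .
  show "(\<integral>t. 1 / (\<sigma>^2 + t^2) \<partial>lborel) = pi / \<bar>\<sigma>\<bar>"
  proof (cases "\<sigma> > 0")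
    case True
    then show ?thesis using e by (simp add: field_simps power2_eq_square)
  next
    case False
    then have "\<sigma> < 0" using assms by simp
    then show ?thesis using e by (simp add: field_simps power2_eq_square)
  qed
qed

lemma trunc_tendsto:
  fixes g :: "real \<Rightarrow> complex"
  assumes "integrable lborel g"
  shows "(\<lambda>n::nat. integral {-real n..real n} g) \<longlonglongrightarrow> (\<integral>t. g t \<partial>lborel)"
proof -
  have si: "set_integrable lborel {-real n..real n} g" for n
    using assms by (intro integrable_mult_indicator[of _ lborel g, unfolded set_integrable_def[symmetric]]) auto
  have eq: "integral {-real n..real n} g = (\<integral>t. indicator {-real n..real n} t *\<^sub>R g t \<partial>lborel)" for n
    using set_borel_integral_eq_integral(2)[OF si[of n]] by (simp add: set_lebesgue_integral_def)
  show ?thesis unfolding eq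
  proof (rule integral_dominated_convergence[where w="\<lambda>t. norm (g t)"])
    show "g \<in> borel_measurable lborel" using assms by auto
    show "(\<lambda>t. indicator {-real n..real n} t *\<^sub>R g t) \<in> borel_measurable lborel" for n
      using assms by (intro borel_measurable_scaleR) auto
    show "integrable lborel (\<lambda>t. norm (g t))" using assms by auto
    show "AE t in lborel. (\<lambda>n. indicator {-real n..real n} t *\<^sub>R g t) \<longlonglongrightarrow> g t"
    proof (intro AE_I2 tendsto_eventually)
      fix t :: real
      obtain N :: nat where "\<bar>t\<bar> \<le> real N" using real_arch_simple by blast
      then show "\<forall>\<^sub>F n in sequentially. indicator {-real n..real n} t *\<^sub>R g t = g t"
        by (intro eventually_sequentiallyI[of N]) (auto simp: indicator_def)
    qed
    show "AE t in lborel. norm (indicator {-real n..real n} t *\<^sub>R g t) \<le> norm (g t)" for n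
      by (intro AE_I2) (auto simp: indicator_def)
  qed
qed

lemma vertical_has_contour:
  fixes f :: "complex \<Rightarrow> complex" and J :: complex and a b \<sigma> :: real
  assumes "a < b" and "((\<lambda>t. f (Complex \<sigma> t)) has_integral J) {a..b}"
  shows "(f has_contour_integral (\<i> * J)) (linepath (Complex \<sigma> a) (Complex \<sigma> b))"
proof -
  let ?F = "\<lambda>t. f (Complex \<sigma> t)"
  have "((\<lambda>x. ?F ((b - a) *\<^sub>R x + a)) has_integral (J /\<^sub>R (b - a) ^ DIM(real)))
          (cbox ((a - a) /\<^sub>R (b - a)) ((b - a) /\<^sub>R (b - a)))"
    using has_integral_affinity_iff[where m="b - a" and f="?F" and I=J and c=a and a=a and b=b] assms by simp
  then have 1: "((\<lambda>x. ?F ((b - a) * x + a)) has_integral (J /\<^sub>R (b - a))) {0..1}"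
    using assms by simp
  have lp: "linepath (Complex \<sigma> a) (Complex \<sigma> b) x = Complex \<sigma> ((b - a) * x + a)" for x
    by (simp add: linepath_def complex_eq_iff algebra_simps scaleR_conv_of_real)
  have "((\<lambda>x. ?F ((b - a) * x + a) * (\<i> * of_real (b - a))) has_integral
          (J /\<^sub>R (b - a)) * (\<i> * of_real (b - a))) {0..1}"
    using has_integral_mult_left[OF 1] .
  moreover have "(J /\<^sub>R (b - a)) * (\<i> * of_real (b - a)) = \<i> * J"
    using assms by (simp add: scaleR_conv_of_real field_simps)
  moreover have "Complex \<sigma> b - Complex \<sigma> a = \<i> * of_real (b - a)"
    by (simp add: complex_eq_iff)
  ultimately show ?thesis
    unfolding has_contour_integral_linepath lp by simp
qed

lemma vertical_contour_integral:
  fixes f :: "complex \<Rightarrow> complex"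
  assumes "a < b" and "continuous_on UNIV f"
  shows "contour_integral (linepath (Complex \<sigma> a) (Complex \<sigma> b)) f
           = \<i> * integral {a..b} (\<lambda>t. f (Complex \<sigma> t))"
proof -
  have "continuous_on {a..b} (\<lambda>t. f (Complex \<sigma> t))"
    by (intro continuous_on_compose2[OF assms(2) Complex_cont]) auto
  then have "((\<lambda>t. f (Complex \<sigma> t)) has_integral integral {a..b} (\<lambda>t. f (Complex \<sigma> t))) {a..b}"
    by (intro integrable_integral integrable_continuous_interval)
  from vertical_has_contour[OF assms(1) this] show ?thesis
    by (rule contour_integral_unique)
qed

lemma horiz_seg:
  assumes "x \<in> closed_segment (Complex a c) (Complex b c)" "a \<le> b"
  shows "Im x = c" "a \<le> Re x" "Re x \<le> b"
proof -
  obtain u where u: "0 \<le> u" "u \<le> 1" "x = (1 - u) *\<^sub>R Complex a c + u *\<^sub>R Complex b c"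
    using assms(1) unfolding closed_segment_def by auto
  have re: "Re x = (1 - u) * a + u * b" and im: "Im x = c" unfolding u(3)
    by (simp_all add: algebra_simps)
  show "Im x = c" by (rule im)
  have "(1 - u) * a + u * b - a = u * (b - a)" by (simp add: algebra_simps)
  moreover have "u * (b - a) \<ge> 0" using u assms by simp
  ultimately show "a \<le> Re x" unfolding re by linarith
  have "b - ((1 - u) * a + u * b) = (1 - u) * (b - a)" by (simp add: algebra_simps)
  moreover have "(1 - u) * (b - a) \<ge> 0" using u assms by simp
  ultimately show "Re x \<le> b" unfolding re by linarith
qed

lemma rect_bound:
  fixes f :: "complex \<Rightarrow> complex"
  assumes hol: "f holomorphic_on UNIV" and "\<sigma>1 < \<sigma>2" "T > 0" "B \<ge> 0"
    and bnd: "\<And>u. \<sigma>1 \<le> u \<Longrightarrow> u \<le> \<sigma>2 \<Longrightarrow> norm (f (Complex u T)) \<le> B \<and> norm (f (Complex u (-T))) \<le> B"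
  shows "norm (integral {-T..T} (\<lambda>t. f (Complex \<sigma>1 t)) - integral {-T..T} (\<lambda>t. f (Complex \<sigma>2 t)))
           \<le> 2 * B * (\<sigma>2 - \<sigma>1)"
proof -
  define A1 where "A1 = Complex \<sigma>1 (-T)"
  define A2 where "A2 = Complex \<sigma>2 (-T)"
  define A3 where "A3 = Complex \<sigma>2 T"
  define A4 where "A4 = Complex \<sigma>1 T"
  have cont: "continuous_on S f" for S
    using holomorphic_on_imp_continuous_on[OF hol] continuous_on_subset by blast
  have ci: "f contour_integrable_on linepath a b" for a b
    by (intro contour_integrable_continuous_linepath cont)
  have rp: "rectpath A1 A3 = linepath A1 A2 +++ linepath A2 A3 +++ linepath A3 A4 +++ linepath A4 A1"
    by (simp add: rectpath_def A1_def A2_def A3_def A4_def Let_def)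
  have "(f has_contour_integral 0) (rectpath A1 A3)"
    by (rule Cauchy_theorem_convex_simple[OF hol]) auto
  then have "contour_integral (rectpath A1 A3) f = 0"
    by (rule contour_integral_unique)
  then have 0: "contour_integral (linepath A1 A2) f + contour_integral (linepath A2 A3) f
         + contour_integral (linepath A3 A4) f + contour_integral (linepath A4 A1) f = 0"
    unfolding rp by (simp add: ci valid_path_join add.assoc)
  have v2: "contour_integral (linepath A2 A3) f = \<i> * integral {-T..T} (\<lambda>t. f (Complex \<sigma>2 t))"
    unfolding A2_def A3_def using assms by (intro vertical_contour_integral cont) auto
  have v1: "contour_integral (linepath A4 A1) f = - (\<i> * integral {-T..T} (\<lambda>t. f (Complex \<sigma>1 t)))"
    unfolding A1_def A4_def using assms
    by (subst contour_integral_reverse_linepath[OF cont]) (simp add: vertical_contour_integral cont)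
  have hb1: "norm (contour_integral (linepath A1 A2) f) \<le> B * (\<sigma>2 - \<sigma>1)"
  proof -
    have "norm (contour_integral (linepath A1 A2) f) \<le> B * norm (A2 - A1)"
    proof (rule has_contour_integral_bound_linepath[OF has_contour_integral_integral[OF ci] \<open>B \<ge> 0\<close>])
      fix x assume "x \<in> closed_segment A1 A2"
      then have "Im x = -T" "\<sigma>1 \<le> Re x" "Re x \<le> \<sigma>2"
        using horiz_seg[of x \<sigma>1 "-T" \<sigma>2] assms unfolding A1_def A2_def by auto
      moreover have "x = Complex (Re x) (-T)" using \<open>Im x = -T\<close> by (simp add: complex_eq_iff)
      ultimately show "norm (f x) \<le> B" using bnd by metis
    qed
    also have "norm (A2 - A1) = \<sigma>2 - \<sigma>1" using assms by (simp add: A1_def A2_def cmod_def)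
    finally show ?thesis .
  qed
  have hb2: "norm (contour_integral (linepath A3 A4) f) \<le> B * (\<sigma>2 - \<sigma>1)"
  proof -
    have "norm (contour_integral (linepath A4 A3) f) \<le> B * norm (A3 - A4)"
    proof (rule has_contour_integral_bound_linepath[OF has_contour_integral_integral[OF ci] \<open>B \<ge> 0\<close>])
      fix x assume "x \<in> closed_segment A4 A3"
      then have "Im x = T" "\<sigma>1 \<le> Re x" "Re x \<le> \<sigma>2"
        using horiz_seg[of x \<sigma>1 "T" \<sigma>2] assms unfolding A3_def A4_def by auto
      moreover have "x = Complex (Re x) T" using \<open>Im x = T\<close> by (simp add: complex_eq_iff)
      ultimately show "norm (f x) \<le> B" using bnd by metis
    qed
    also have "norm (A3 - A4) = \<sigma>2 - \<sigma>1" using assms by (simp add: A3_def A4_def cmod_def)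
    finally show ?thesis
      by (subst contour_integral_reverse_linepath[OF cont]) simp
  qed
  have "\<i> * (integral {-T..T} (\<lambda>t. f (Complex \<sigma>1 t)) - integral {-T..T} (\<lambda>t. f (Complex \<sigma>2 t)))
      = contour_integral (linepath A1 A2) f + contour_integral (linepath A3 A4) f"
    using 0 v1 v2 by (simp add: algebra_simps)
  then have "norm (integral {-T..T} (\<lambda>t. f (Complex \<sigma>1 t)) - integral {-T..T} (\<lambda>t. f (Complex \<sigma>2 t)))
      = norm (contour_integral (linepath A1 A2) f + contour_integral (linepath A3 A4) f)"
    by (metis norm_ii norm_mult mult_1)
  also have "\<dots> \<le> B * (\<sigma>2 - \<sigma>1) + B * (\<sigma>2 - \<sigma>1)"
    using hb1 hb2 norm_triangle_le by (metis add_mono norm_triangle_ineq order_trans)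
  finally show ?thesis by simp
qed

definition cc :: "real \<Rightarrow> nat \<Rightarrow> nat \<Rightarrow> complex" where
  "cc x p n = of_real x ^ (n + p + 1) / fact (n + p + 1)"

definition rr :: "real \<Rightarrow> nat \<Rightarrow> complex \<Rightarrow> complex" where
  "rr x p z = (\<Sum>n. cc x p n * z ^ n)"

lemma rr_summable: "summable (\<lambda>n. cc x p n * y ^ n)"
proof (rule summable_comparison_test[OF _ summable_mult[OF summable_exp[of "\<bar>x\<bar> * norm y"], of "\<bar>x\<bar>^(p+1)"]])
  show "\<exists>N. \<forall>n\<ge>N. norm (cc x p n * y ^ n) \<le> \<bar>x\<bar> ^ (p + 1) * (inverse (fact n) * (\<bar>x\<bar> * norm y) ^ n)"
  proof (intro exI allI impI)
    fix n :: nat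
    have f: "(fact n :: real) \<le> fact (n + p + 1)" by (intro fact_mono) auto
    have fp: "(0::real) < fact n" by simp
    have "norm (cc x p n * y ^ n) = \<bar>x\<bar> ^ (p + 1) * (\<bar>x\<bar> * norm y) ^ n / fact (n + p + 1)"
      unfolding cc_def norm_mult norm_divide norm_power norm_fact norm_of_real power_add power_mult_distrib
      by (simp add: field_simps)
    also have "\<dots> \<le> \<bar>x\<bar> ^ (p + 1) * (\<bar>x\<bar> * norm y) ^ n / fact n"
      by (intro divide_left_mono f) auto
    finally show "norm (cc x p n * y ^ n) \<le> \<bar>x\<bar> ^ (p + 1) * (inverse (fact n) * (\<bar>x\<bar> * norm y) ^ n)"
      by (simp add: field_simps)
  qed
qed

lemma rr_holomorphic: "rr x p holomorphic_on UNIV"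
proof -
  have "\<And>z. (rr x p has_field_derivative (\<Sum>n. diffs (cc x p) n * z ^ n)) (at z)"
    unfolding rr_def[abs_def] by (rule termdiffs_strong_converges_everywhere[OF rr_summable])
  then show ?thesis
    by (auto simp: holomorphic_on_def field_differentiable_def intro: has_field_derivative_at_within)
qed

lemma rr_cont: "continuous_on S (rr x p)"
  using holomorphic_on_imp_continuous_on[OF rr_holomorphic] continuous_on_subset by blast

lemma pow_div_inv: "z \<noteq> 0 \<Longrightarrow> k \<le> m \<Longrightarrow> (z::complex) ^ k / z ^ m = inverse z ^ (m - k)"
  by (simp add: power_diff power_inverse divide_inverse)

lemma decomp:
  assumes "z \<noteq> 0"
  shows "exp (z * of_real x) / z ^ (p + 1)
    = rr x p z + (\<Sum>k<p+1. (of_real x ^ k / of_nat (fact k)) * inverse z ^ (p + 1 - k))"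
proof -
  let ?f = "\<lambda>n. (z * of_real x) ^ n /\<^sub>R fact n"
  have s: "summable ?f" by (rule summable_exp_generic)
  have "exp (z * of_real x) = (\<Sum>n. ?f (n + (p+1))) + (\<Sum>i<p+1. ?f i)"
    unfolding exp_def by (rule suminf_split_initial_segment[OF s])
  also have "(\<lambda>n. ?f (n + (p+1))) = (\<lambda>n. z ^ (p+1) * (cc x p n * z ^ n))"
  proof
    fix n
    have "?f (n + (p+1)) = (z * of_real x) ^ (n + p + 1) / fact (n + p + 1)"
      by (simp add: scaleR_conv_of_real divide_inverse mult.commute add.assoc)
    also have "\<dots> = z ^ (p+1) * (cc x p n * z ^ n)"
      unfolding cc_def power_mult_distrib by (simp add: power_add)
    finally show "?f (n + (p+1)) = z ^ (p+1) * (cc x p n * z ^ n)" .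
  qed
  also have "(\<Sum>n. z ^ (p+1) * (cc x p n * z ^ n)) = z ^ (p+1) * rr x p z"
    unfolding rr_def by (rule suminf_mult[OF rr_summable])
  finally have e: "exp (z * of_real x) = z ^ (p+1) * rr x p z + (\<Sum>i<p+1. ?f i)" .
  have "(\<Sum>i<p+1. ?f i) / z ^ (p+1) = (\<Sum>k<p+1. (of_real x ^ k / of_nat (fact k)) * inverse z ^ (p + 1 - k))"
    unfolding sum_divide_distrib
  proof (rule sum.cong)
    fix k assume "k \<in> {..<p+1}"
    then have "k \<le> p + 1" by simp
    then have "z ^ k / z ^ (p+1) = inverse z ^ (p + 1 - k)" using pow_div_inv assms by blast
    have a: "?f k = (of_real x ^ k / of_nat (fact k)) * z ^ k"
      by (simp add: scaleR_conv_of_real power_mult_distrib divide_inverse mult_ac)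
    show "?f k / z ^ (p+1) = (of_real x ^ k / of_nat (fact k)) * inverse z ^ (p + 1 - k)"
      unfolding a times_divide_eq_right[symmetric] \<open>z ^ k / z ^ (p+1) = inverse z ^ (p + 1 - k)\<close> ..
  qed simp
  then show ?thesis unfolding e using assms by (simp add: field_simps)
qed

lemma Complex_vd: "((\<lambda>t. Complex s t) has_vector_derivative \<i>) (at t)"
proof -
  have "((\<lambda>t. of_real s + of_real t * \<i>) has_vector_derivative (0 + of_real 1 * \<i>)) (at t)"
    by (intro has_vector_derivative_add has_vector_derivative_const has_vector_derivative_mult_left
        has_vector_derivative_of_real[OF DERIV_ident])
  then show ?thesis by (simp add: Complex_eq mult.commute)
qed

lemma Qm_integral:
  assumes "\<sigma> \<noteq> 0" "m \<ge> 2" "a \<le> b"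
  shows "((\<lambda>t. inverse (Complex \<sigma> t) ^ m) has_integral
          (\<i> / of_nat (m - 1)) * (inverse (Complex \<sigma> b) ^ (m - 1) - inverse (Complex \<sigma> a) ^ (m - 1))) {a..b}"
proof -
  define g where "g = (\<lambda>w::complex. (\<i> / of_nat (m - 1)) * inverse w ^ (m - 1))"
  have dg: "(g has_field_derivative (- \<i> * inverse w ^ m)) (at w)" if "w \<noteq> 0" for w
  proof -
    have "(g has_field_derivative ((\<i> / of_nat (m - 1)) * (of_nat (m - 1) * inverse w ^ (m - 1 - 1) * (- (inverse w * inverse w))))) (at w)"
      unfolding g_def using that by (auto intro!: derivative_eq_intros)
    moreover have "(\<i> / of_nat (m - 1)) * (of_nat (m - 1) * inverse w ^ (m - 1 - 1) * (- (inverse w * inverse w))) = - \<i> * inverse w ^ m"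
    proof -
      have gen: "(\<i> / of_nat (m - 1)) * (of_nat (m - 1) * v ^ (m - 1 - 1) * (- (v * v))) = - \<i> * v ^ m" for v :: complex
      proof -
        define k where "k = m - 2"
        have m: "m = Suc (Suc k)" using assms(2) unfolding k_def by simp
        have c: "of_nat (Suc k) \<noteq> (0::complex)" by (rule of_nat_neq_0)
        show ?thesis unfolding m using c by (simp add: field_simps power_Suc2)
      qed
      show ?thesis by (rule gen)
    qed
    ultimately show ?thesis by simp
  qed
  have "((g \<circ> (\<lambda>t. Complex \<sigma> t)) has_vector_derivative (\<i> * (- \<i> * inverse (Complex \<sigma> t) ^ m))) (at t)" for t
    by (rule field_vector_diff_chain_at[OF Complex_vd dg[OF Complex_nz[OF assms(1)]]])
  then have "((\<lambda>t. g (Complex \<sigma> t)) has_vector_derivative inverse (Complex \<sigma> t) ^ m) (at t within {a..b})" for t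
    by (auto simp: o_def intro: has_vector_derivative_at_within)
  from fundamental_theorem_of_calculus[OF assms(3) this] show ?thesis
    by (simp add: g_def algebra_simps)
qed

lemma Q1_integral:
  assumes "\<sigma> \<noteq> 0" "a \<le> b"
  shows "((\<lambda>t. inverse (Complex \<sigma> t)) has_integral
     (of_real (arctan (b / \<sigma>) - arctan (a / \<sigma>)) - \<i> * of_real ((ln (\<sigma>^2 + b^2) - ln (\<sigma>^2 + a^2)) / 2))) {a..b}"
proof -
  define F where "F = (\<lambda>t. of_real (arctan (t / \<sigma>)) - \<i> * of_real (ln (\<sigma>^2 + t^2) / 2))"
  have pos: "\<sigma>^2 + t^2 > 0" for t using assms by (simp add: add_pos_nonneg)
  have d1: "((\<lambda>t. arctan (t / \<sigma>)) has_real_derivative (\<sigma> / (\<sigma>^2 + t^2))) (at t)" for t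
  proof -
    have "((\<lambda>t. arctan (t / \<sigma>)) has_real_derivative (inverse (1 + (t / \<sigma>)^2) * (1 / \<sigma>))) (at t)"
      by (intro DERIV_arctan[THEN DERIV_chain2] DERIV_cdivide DERIV_ident)
    moreover have "inverse (1 + (t / \<sigma>)^2) * (1 / \<sigma>) = \<sigma> / (\<sigma>^2 + t^2)"
      using assms(1) pos[of t] by (simp add: field_simps power2_eq_square)
    ultimately show ?thesis by simp
  qed
  have d2: "((\<lambda>t. ln (\<sigma>^2 + t^2) / 2) has_real_derivative (t / (\<sigma>^2 + t^2))) (at t)" for t
  proof -
    have nz: "\<sigma> * \<sigma> + t * t \<noteq> 0" using pos[of t] unfolding power2_eq_square by linarith
    show ?thesis
      using pos[of t] nz by (auto intro!: derivative_eq_intros simp: power2_eq_square field_simps assms(1))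
  qed
  have "(F has_vector_derivative (of_real (\<sigma> / (\<sigma>^2 + t^2)) - \<i> * of_real (t / (\<sigma>^2 + t^2)))) (at t)" for t
    unfolding F_def by (intro has_vector_derivative_diff has_vector_derivative_mult_right
       has_vector_derivative_of_real d1 d2)
  moreover have "of_real (\<sigma> / (\<sigma>^2 + t^2)) - \<i> * of_real (t / (\<sigma>^2 + t^2))
      = inverse (Complex \<sigma> t)" for t
    by (simp add: complex_eq_iff power2_eq_square)
  ultimately have "(F has_vector_derivative inverse (Complex \<sigma> t)) (at t within {a..b})" for t
    by (metis has_vector_derivative_at_within)
  from fundamental_theorem_of_calculus[OF assms(2) this] show ?thesis
    by (simp add: F_def algebra_simps diff_divide_distrib)
qed

definition hh :: "real \<Rightarrow> nat \<Rightarrow> complex \<Rightarrow> complex" where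
  "hh x p z = exp (z * of_real x) / z ^ (p + 1)"

lemma cont_line: "continuous_on (-{0}) f \<Longrightarrow> \<sigma> \<noteq> 0 \<Longrightarrow> continuous_on A (\<lambda>t. f (Complex \<sigma> t))"
  by (rule continuous_on_compose2[OF _ Complex_cont]) (auto simp: complex_eq_iff)

lemma hh_cont: "continuous_on (-{0}) (hh x p)"
  unfolding hh_def by (intro continuous_intros) auto

lemma inv_pow_cont: "continuous_on (-{0}) (\<lambda>z::complex. inverse z ^ m)"
  by (intro continuous_intros) auto

lemma meas_line: "continuous_on (-{0}) f \<Longrightarrow> \<sigma> \<noteq> 0 \<Longrightarrow> (\<lambda>t. f (Complex \<sigma> t)) \<in> borel_measurable lborel"
  using borel_measurable_continuous_onI[OF cont_line] by simp

lemma norm_inv_pow_bound: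
  assumes "\<sigma> \<noteq> 0" "m \<ge> 2"
  shows "norm (inverse (Complex \<sigma> t) ^ m) \<le> (1 / \<bar>\<sigma>\<bar> ^ (m - 2)) * (1 / (\<sigma>^2 + t^2))"
proof -
  let ?n = "norm (Complex \<sigma> t)"
  have g: "\<bar>\<sigma>\<bar> \<le> ?n" by (rule norm_Complex_ge)
  have pos: "0 < \<bar>\<sigma>\<bar>" using assms by simp
  have mm: "m = (m - 2) + 2" using assms(2) by simp
  have "?n ^ m = ?n ^ (m - 2) * ?n ^ 2" by (subst mm, subst power_add) simp
  also have "\<dots> \<ge> \<bar>\<sigma>\<bar> ^ (m - 2) * (\<sigma>^2 + t^2)"
    unfolding norm_Complex_sq by (intro mult_right_mono power_mono g) auto
  finally have le: "\<bar>\<sigma>\<bar> ^ (m - 2) * (\<sigma>^2 + t^2) \<le> ?n ^ m" .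
  have p2: "0 < \<bar>\<sigma>\<bar> ^ (m - 2) * (\<sigma>^2 + t^2)"
    using pos by (intro mult_pos_pos) (auto simp: add_pos_nonneg)
  have "norm (inverse (Complex \<sigma> t) ^ m) = 1 / ?n ^ m"
    by (simp add: norm_power norm_inverse divide_inverse power_inverse)
  also have "\<dots> \<le> 1 / (\<bar>\<sigma>\<bar> ^ (m - 2) * (\<sigma>^2 + t^2))"
    by (rule divide_left_mono[OF le]) (use p2 le in auto)
  finally show ?thesis by simp
qed

lemma inv_pow_integrable:
  assumes "\<sigma> \<noteq> 0" "m \<ge> 2"
  shows "integrable lborel (\<lambda>t. inverse (Complex \<sigma> t) ^ m)"
proof (rule Bochner_Integration.integrable_bound)
  show "integrable lborel (\<lambda>t. (1 / \<bar>\<sigma>\<bar> ^ (m - 2)) * (1 / (\<sigma>^2 + t^2)))"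
    by (intro integrable_mult_right inv_sq_integrable(1)[OF assms(1)])
  show "(\<lambda>t. inverse (Complex \<sigma> t) ^ m) \<in> borel_measurable lborel"
    by (rule meas_line[OF inv_pow_cont assms(1)])
  show "AE t in lborel. norm (inverse (Complex \<sigma> t) ^ m) \<le> norm ((1 / \<bar>\<sigma>\<bar> ^ (m - 2)) * (1 / (\<sigma>^2 + t^2)))"
    using norm_inv_pow_bound[OF assms] by (intro AE_I2) (simp add: add_nonneg_nonneg)
qed

lemma norm_hh: "norm (hh x p (Complex \<sigma> t)) = exp (\<sigma> * x) * norm (inverse (Complex \<sigma> t) ^ (p + 1))"
  unfolding hh_def norm_divide norm_exp_eq_Re norm_power norm_inverse by (simp add: divide_inverse power_inverse)

lemma hh_integrable:
  assumes "\<sigma> \<noteq> 0" "p \<ge> 1"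
  shows "integrable lborel (\<lambda>t. hh x p (Complex \<sigma> t))"
proof (rule Bochner_Integration.integrable_bound)
  show "integrable lborel (\<lambda>t. exp (\<sigma> * x) * norm (inverse (Complex \<sigma> t) ^ (p + 1)))"
    using inv_pow_integrable[OF assms(1), of "p+1"] assms by (intro integrable_mult_right integrable_norm) auto
  show "(\<lambda>t. hh x p (Complex \<sigma> t)) \<in> borel_measurable lborel"
    by (rule meas_line[OF hh_cont assms(1)])
  show "AE t in lborel. norm (hh x p (Complex \<sigma> t)) \<le> norm (exp (\<sigma> * x) * norm (inverse (Complex \<sigma> t) ^ (p + 1)))"
    by (intro AE_I2) (simp add: norm_hh)
qed

lemma inv_pow_integral_0:
  assumes "\<sigma> \<noteq> 0" "m \<ge> 2"
  shows "(\<integral>t. inverse (Complex \<sigma> t) ^ m \<partial>lborel) = 0"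
proof -
  have lim1: "(\<lambda>n::nat. integral {-real n..real n} (\<lambda>t. inverse (Complex \<sigma> t) ^ m))
      \<longlonglongrightarrow> (\<integral>t. inverse (Complex \<sigma> t) ^ m \<partial>lborel)"
    by (rule trunc_tendsto[OF inv_pow_integrable[OF assms]])
  have e: "integral {-real n..real n} (\<lambda>t. inverse (Complex \<sigma> t) ^ m)
     = (\<i> / of_nat (m - 1)) * (inverse (Complex \<sigma> (real n)) ^ (m - 1) - inverse (Complex \<sigma> (- real n)) ^ (m - 1))" for n
    using Qm_integral[OF assms, of "- real n" "real n"] by (simp add: integral_unique)
  have z: "(\<lambda>n::nat. inverse (Complex \<sigma> (c * real n))) \<longlonglongrightarrow> 0" if "c = 1 \<or> c = -1" for c
  proof (rule Lim_null_comparison)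
    show "\<forall>\<^sub>F n in sequentially. norm (inverse (Complex \<sigma> (c * real n))) \<le> 1 / real n"
    proof (intro eventually_sequentiallyI[of 1] )
      fix n :: nat assume n: "1 \<le> n"
      have "real n \<le> norm (Complex \<sigma> (c * real n))"
        using norm_Complex_ge(2)[where s=\<sigma> and t="c * real n"] that by auto
      then show "norm (inverse (Complex \<sigma> (c * real n))) \<le> 1 / real n"
        using n by (simp add: norm_inverse divide_inverse le_imp_inverse_le)
    qed
    show "(\<lambda>n. 1 / real n) \<longlonglongrightarrow> 0" by (rule lim_const_over_n)
  qed
  have "(\<lambda>n. (\<i> / of_nat (m - 1)) * (inverse (Complex \<sigma> (1 * real n)) ^ (m - 1) - inverse (Complex \<sigma> (-1 * real n)) ^ (m - 1)))
      \<longlonglongrightarrow> (\<i> / of_nat (m - 1)) * (0 ^ (m - 1) - 0 ^ (m - 1))"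
    by (intro tendsto_intros z) auto
  then have "(\<lambda>n::nat. integral {-real n..real n} (\<lambda>t. inverse (Complex \<sigma> t) ^ m)) \<longlonglongrightarrow> 0"
    unfolding e by simp
  from LIMSEQ_unique[OF lim1 this] show ?thesis .
qed

lemma Q1_trunc:
  assumes "\<sigma> \<noteq> 0"
  shows "integral {-real n..real n} (\<lambda>t. inverse (Complex \<sigma> t)) = of_real (2 * arctan (real n / \<sigma>))"
  using Q1_integral[OF assms, of "- real n" "real n"] by (simp add: integral_unique arctan_minus)

lemma Q1_lim:
  assumes "\<sigma> \<noteq> 0"
  shows "(\<lambda>n::nat. integral {-real n..real n} (\<lambda>t. inverse (Complex \<sigma> t))) \<longlonglongrightarrow> of_real (pi * sgn \<sigma>)"
proof -
  have "(\<lambda>n::nat. 2 * arctan (real n / \<sigma>)) \<longlonglongrightarrow> pi * sgn \<sigma>"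
  proof (cases "\<sigma> > 0")
    case True
    then show ?thesis by real_asymp
  next
    case False
    then have "\<sigma> < 0" using assms by simp
    then show ?thesis by real_asymp
  qed
  then show ?thesis unfolding Q1_trunc[OF assms] by (intro tendsto_of_real)
qed

lemma norm_inv_pow_le:
  assumes "j \<ge> 1" "norm z \<ge> T" "T \<ge> 1"
  shows "norm (inverse (z::complex) ^ j) \<le> 1 / T"
proof -
  have z1: "norm z \<ge> 1" using assms by simp
  have "norm z \<le> norm z ^ j" using z1 assms(1) by (simp add: power_increasing[of 1 j "norm z", simplified])
  then have "T \<le> norm z ^ j" using assms by simp
  then have "inverse (norm z ^ j) \<le> inverse T" using assms by (intro le_imp_inverse_le) auto
  then show ?thesis by (simp add: norm_power norm_inverse power_inverse divide_inverse)
qed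

definition cf :: "real \<Rightarrow> nat \<Rightarrow> complex" where "cf x k = of_real x ^ k / of_nat (fact k)"

lemma decomp': "z \<noteq> 0 \<Longrightarrow> hh x p z = rr x p z + (\<Sum>k<p+1. cf x k * inverse z ^ (p + 1 - k))"
  unfolding hh_def cf_def by (rule decomp)

lemma rr_bound:
  assumes "T \<ge> 1" "\<bar>\<tau>\<bar> \<ge> T" "\<sigma>1 \<le> u" "u \<le> \<sigma>2"
  shows "norm (rr x p (Complex u \<tau>)) \<le> (max (exp (\<sigma>1 * x)) (exp (\<sigma>2 * x)) + (\<Sum>k<p+1. norm (cf x k))) / T"
proof -
  let ?z = "Complex u \<tau>"
  have nz: "norm ?z \<ge> T" using norm_Complex_ge(2)[where s=u and t=\<tau>] assms by simp
  have z0: "?z \<noteq> 0" using nz assms by auto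
  have "rr x p ?z = hh x p ?z - (\<Sum>k<p+1. cf x k * inverse ?z ^ (p + 1 - k))"
    using decomp'[OF z0] by simp
  then have t1: "norm (rr x p ?z) \<le> norm (hh x p ?z) + norm (\<Sum>k<p+1. cf x k * inverse ?z ^ (p + 1 - k))"
    by (simp add: norm_triangle_ineq4)
  have t2: "norm (hh x p ?z) \<le> max (exp (\<sigma>1 * x)) (exp (\<sigma>2 * x)) * (1 / T)"
  proof -
    have e: "exp (u * x) \<le> max (exp (\<sigma>1 * x)) (exp (\<sigma>2 * x))"
    proof (cases "x \<ge> 0")
      case True
      then have "u * x \<le> \<sigma>2 * x" using assms by (intro mult_right_mono) auto
      then have "exp (u * x) \<le> exp (\<sigma>2 * x)" by simp
      then show ?thesis by (simp add: le_max_iff_disj)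
    next
      case False
      then have "u * x \<le> \<sigma>1 * x" using assms by (intro mult_right_mono_neg) auto
      then have "exp (u * x) \<le> exp (\<sigma>1 * x)" by simp
      then show ?thesis by (simp add: le_max_iff_disj)
    qed
    have "norm (hh x p ?z) = exp (u * x) * norm (inverse ?z ^ (p + 1))" by (rule norm_hh)
    also have "\<dots> \<le> max (exp (\<sigma>1 * x)) (exp (\<sigma>2 * x)) * (1 / T)"
      by (intro mult_mono e norm_inv_pow_le nz assms) (auto simp: le_max_iff_disj)
    finally show ?thesis .
  qed
  have t3: "norm (\<Sum>k<p+1. cf x k * inverse ?z ^ (p + 1 - k)) \<le> (\<Sum>k<p+1. norm (cf x k) * (1 / T))"
  proof (rule order_trans[OF norm_sum sum_mono])
    fix k assume "k \<in> {..<p+1}"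
    then have "p + 1 - k \<ge> 1" by simp
    then show "norm (cf x k * inverse ?z ^ (p + 1 - k)) \<le> norm (cf x k) * (1 / T)"
      unfolding norm_mult by (intro mult_left_mono norm_inv_pow_le nz assms) auto
  qed
  have t4: "(\<Sum>k<p+1. norm (cf x k) * (1 / T)) = (\<Sum>k<p+1. norm (cf x k)) * (1 / T)"
    by (rule sum_distrib_right[symmetric])
  have "norm (rr x p ?z) \<le> (max (exp (\<sigma>1 * x)) (exp (\<sigma>2 * x)) + (\<Sum>k<p+1. norm (cf x k))) * (1 / T)"
    using t1 t2 t3 unfolding t4 distrib_right by linarith
  then show ?thesis by simp
qed

lemma cont_int: "continuous_on (-{0}) (f :: complex \<Rightarrow> complex) \<Longrightarrow> \<sigma> \<noteq> 0 \<Longrightarrow> (\<lambda>t. f (Complex \<sigma> t)) integrable_on {a..b}"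
  by (intro integrable_continuous_interval) (rule cont_line)

lemma trunc_decomp:
  assumes "\<sigma> \<noteq> 0"
  shows "integral {a..b} (\<lambda>t. hh x p (Complex \<sigma> t)) = integral {a..b} (\<lambda>t. rr x p (Complex \<sigma> t))
     + (\<Sum>k<p+1. cf x k * integral {a..b} (\<lambda>t. inverse (Complex \<sigma> t) ^ (p + 1 - k)))"
proof -
  have rint: "(\<lambda>t. rr x p (Complex \<sigma> t)) integrable_on {a..b}"
    by (intro integrable_continuous_interval continuous_on_compose2[OF rr_cont Complex_cont]) auto
  have qint: "(\<lambda>t. cf x k * inverse (Complex \<sigma> t) ^ (p + 1 - k)) integrable_on {a..b}" for k
    by (rule integrable_on_mult_right[OF cont_int[OF inv_pow_cont assms]])
  have "integral {a..b} (\<lambda>t. hh x p (Complex \<sigma> t)) = integral {a..b}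
      (\<lambda>t. rr x p (Complex \<sigma> t) + (\<Sum>k<p+1. cf x k * inverse (Complex \<sigma> t) ^ (p + 1 - k)))"
    using decomp'[OF Complex_nz[OF assms]] by simp
  also have "\<dots> = integral {a..b} (\<lambda>t. rr x p (Complex \<sigma> t))
      + (\<Sum>k<p+1. integral {a..b} (\<lambda>t. cf x k * inverse (Complex \<sigma> t) ^ (p + 1 - k)))"
  proof -
    have sint: "(\<lambda>t. \<Sum>k<p+1. cf x k * inverse (Complex \<sigma> t) ^ (p + 1 - k)) integrable_on {a..b}"
      by (rule integrable_sum) (use qint in auto)
    have "integral {a..b} (\<lambda>t. \<Sum>k<p+1. cf x k * inverse (Complex \<sigma> t) ^ (p + 1 - k))
        = (\<Sum>k<p+1. integral {a..b} (\<lambda>t. cf x k * inverse (Complex \<sigma> t) ^ (p + 1 - k)))"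
      by (rule integral_sum) (use qint in auto)
    then show ?thesis by (simp only: integral_add[OF rint sint])
  qed
  also have "\<dots> = integral {a..b} (\<lambda>t. rr x p (Complex \<sigma> t))
      + (\<Sum>k<p+1. cf x k * integral {a..b} (\<lambda>t. inverse (Complex \<sigma> t) ^ (p + 1 - k)))"
    by simp
  finally show ?thesis .
qed

lemma line_diff:
  assumes "\<sigma>1 < \<sigma>2" "\<sigma>1 \<noteq> 0" "\<sigma>2 \<noteq> 0" "p \<ge> 1"
  shows "(\<integral>t. hh x p (Complex \<sigma>1 t) \<partial>lborel) - (\<integral>t. hh x p (Complex \<sigma>2 t) \<partial>lborel)
     = cf x p * of_real (pi * sgn \<sigma>1 - pi * sgn \<sigma>2)"
proof -
  define Ir where "Ir = (\<lambda>\<sigma> (n::nat). integral {-real n..real n} (\<lambda>t. rr x p (Complex \<sigma> t)))"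
  define Iq where "Iq = (\<lambda>\<sigma> k (n::nat). integral {-real n..real n} (\<lambda>t. inverse (Complex \<sigma> t) ^ (p + 1 - k)))"
  define Ih where "Ih = (\<lambda>\<sigma> (n::nat). integral {-real n..real n} (\<lambda>t. hh x p (Complex \<sigma> t)))"
  have lim: "(\<lambda>n. Ih \<sigma>1 n - Ih \<sigma>2 n) \<longlonglongrightarrow>
      (\<integral>t. hh x p (Complex \<sigma>1 t) \<partial>lborel) - (\<integral>t. hh x p (Complex \<sigma>2 t) \<partial>lborel)"
    unfolding Ih_def using assms
    by (intro tendsto_diff trunc_tendsto hh_integrable) auto
  have dec: "Ih \<sigma> n = Ir \<sigma> n + (\<Sum>k<p. cf x k * Iq \<sigma> k n) + cf x p * Iq \<sigma> p n" if "\<sigma> \<noteq> 0" for \<sigma> n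
    unfolding Ih_def Ir_def Iq_def trunc_decomp[OF that] by simp
  have eqD: "Ih \<sigma>1 n - Ih \<sigma>2 n = (Ir \<sigma>1 n - Ir \<sigma>2 n) + (\<Sum>k<p. cf x k * (Iq \<sigma>1 k n - Iq \<sigma>2 k n))
      + cf x p * (Iq \<sigma>1 p n - Iq \<sigma>2 p n)" for n
    unfolding dec[OF assms(2)] dec[OF assms(3)]
    by (simp add: algebra_simps sum_subtractf[symmetric])
  define B0 where "B0 = max (exp (\<sigma>1 * x)) (exp (\<sigma>2 * x)) + (\<Sum>k<p+1. norm (cf x k))"
  have B0: "B0 \<ge> 0" unfolding B0_def by (intro add_nonneg_nonneg sum_nonneg) (auto simp: le_max_iff_disj)
  have R: "(\<lambda>n. Ir \<sigma>1 n - Ir \<sigma>2 n) \<longlonglongrightarrow> 0"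
  proof (rule Lim_null_comparison)
    show "\<forall>\<^sub>F n in sequentially. norm (Ir \<sigma>1 n - Ir \<sigma>2 n) \<le> 2 * (B0 / real n) * (\<sigma>2 - \<sigma>1)"
    proof (intro eventually_sequentiallyI[of 1])
      fix n :: nat assume n: "1 \<le> n"
      show "norm (Ir \<sigma>1 n - Ir \<sigma>2 n) \<le> 2 * (B0 / real n) * (\<sigma>2 - \<sigma>1)"
        unfolding Ir_def
      proof (rule rect_bound[OF rr_holomorphic assms(1)])
        show "0 < real n" using n by simp
        show "0 \<le> B0 / real n" using B0 by simp
        fix u assume "\<sigma>1 \<le> u" "u \<le> \<sigma>2"
        then show "norm (rr x p (Complex u (real n))) \<le> B0 / real n \<and> norm (rr x p (Complex u (- real n))) \<le> B0 / real n"
          unfolding B0_def using n by (intro conjI rr_bound) auto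
      qed
    qed
    show "(\<lambda>n. 2 * (B0 / real n) * (\<sigma>2 - \<sigma>1)) \<longlonglongrightarrow> 0" by real_asymp
  qed
  have Qk: "(\<lambda>n. Iq \<sigma> k n) \<longlonglongrightarrow> 0" if "k < p" "\<sigma> \<noteq> 0" for k \<sigma>
  proof -
    have m: "p + 1 - k \<ge> 2" using that by simp
    show ?thesis unfolding Iq_def
      using trunc_tendsto[OF inv_pow_integrable[OF that(2) m]] inv_pow_integral_0[OF that(2) m] by simp
  qed
  have Qp: "(\<lambda>n. Iq \<sigma> p n) \<longlonglongrightarrow> of_real (pi * sgn \<sigma>)" if "\<sigma> \<noteq> 0" for \<sigma>
    unfolding Iq_def using Q1_lim[OF that] by simp
  have "(\<lambda>n. (Ir \<sigma>1 n - Ir \<sigma>2 n) + (\<Sum>k<p. cf x k * (Iq \<sigma>1 k n - Iq \<sigma>2 k n))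
      + cf x p * (Iq \<sigma>1 p n - Iq \<sigma>2 p n)) \<longlonglongrightarrow>
      0 + (\<Sum>k<p. cf x k * (0 - 0)) + cf x p * (of_real (pi * sgn \<sigma>1) - of_real (pi * sgn \<sigma>2))"
    by (intro tendsto_add tendsto_sum tendsto_mult tendsto_diff tendsto_const R Qk Qp assms) auto
  then have "(\<lambda>n. Ih \<sigma>1 n - Ih \<sigma>2 n) \<longlonglongrightarrow> cf x p * of_real (pi * sgn \<sigma>1 - pi * sgn \<sigma>2)"
    unfolding eqD by simp
  from LIMSEQ_unique[OF lim this] show ?thesis .
qed

lemma line_bound:
  assumes "\<bar>\<sigma>\<bar> \<ge> 1" "p \<ge> 1"
  shows "norm (\<integral>t. hh x p (Complex \<sigma> t) \<partial>lborel) \<le> exp (\<sigma> * x) * pi / \<bar>\<sigma>\<bar>"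
proof -
  have s0: "\<sigma> \<noteq> 0" using assms by auto
  have "norm (\<integral>t. hh x p (Complex \<sigma> t) \<partial>lborel) \<le> (\<integral>t. norm (hh x p (Complex \<sigma> t)) \<partial>lborel)"
    by (rule integral_norm_bound)
  also have "\<dots> \<le> (\<integral>t. exp (\<sigma> * x) * (1 / (\<sigma>^2 + t^2)) \<partial>lborel)"
  proof (rule integral_mono)
    show "integrable lborel (\<lambda>t. norm (hh x p (Complex \<sigma> t)))"
      using hh_integrable[OF s0 assms(2)] by (rule integrable_norm)
    show "integrable lborel (\<lambda>t. exp (\<sigma> * x) * (1 / (\<sigma>^2 + t^2)))"
      by (intro integrable_mult_right inv_sq_integrable(1)[OF s0])
    fix t
    have "norm (inverse (Complex \<sigma> t) ^ (p + 1)) \<le> (1 / \<bar>\<sigma>\<bar> ^ (p + 1 - 2)) * (1 / (\<sigma>^2 + t^2))"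
      using norm_inv_pow_bound[OF s0, of "p+1" t] assms by simp
    also have "\<dots> \<le> 1 * (1 / (\<sigma>^2 + t^2))"
    proof (rule mult_right_mono)
      have "1 \<le> \<bar>\<sigma>\<bar> ^ (p + 1 - 2)" using assms by (intro one_le_power) auto
      then show "1 / \<bar>\<sigma>\<bar> ^ (p + 1 - 2) \<le> 1" using s0 by (simp add: divide_le_eq_1)
    qed (simp add: add_nonneg_nonneg)
    finally have "norm (inverse (Complex \<sigma> t) ^ (p + 1)) \<le> 1 / (\<sigma>^2 + t^2)" by simp
    then show "norm (hh x p (Complex \<sigma> t)) \<le> exp (\<sigma> * x) * (1 / (\<sigma>^2 + t^2))"
      unfolding norm_hh by (intro mult_left_mono) auto
  qed
  also have "\<dots> = exp (\<sigma> * x) * pi / \<bar>\<sigma>\<bar>"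
    using inv_sq_integrable(2)[OF s0] by (simp only: integral_mult_right_zero) simp
  finally show ?thesis .
qed

lemma le_zero_seq:
  fixes a c :: real
  assumes "\<And>n::nat. a \<le> c / (real n + 1)"
  shows "a \<le> 0"
proof -
  have "(\<lambda>n::nat. c / (real n + 1)) \<longlonglongrightarrow> 0" by real_asymp
  then show ?thesis by (rule LIMSEQ_le_const) (use assms in auto)
qed

lemma line_value:
  assumes "s < 0" "p \<ge> 1"
  shows "(\<integral>t. hh x p (Complex s t) \<partial>lborel) = of_real (2 * pi / fact p * ((max 0 x) ^ p - x ^ p))"
proof (cases "x \<ge> 0")
  case True
  have "norm (\<integral>t. hh x p (Complex s t) \<partial>lborel) \<le> pi / (real n + 1)" for n :: nat
  proof -
    define \<sigma> where "\<sigma> = s - real n - 1"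
    have s1: "\<sigma> < s" "\<sigma> \<noteq> 0" "\<sigma> < 0" "\<bar>\<sigma>\<bar> \<ge> real n + 1" using assms unfolding \<sigma>_def by auto
    have "(\<integral>t. hh x p (Complex \<sigma> t) \<partial>lborel) - (\<integral>t. hh x p (Complex s t) \<partial>lborel) = 0"
      using line_diff[OF s1(1) s1(2) _ assms(2), of x] assms s1 by simp
    then have eq: "(\<integral>t. hh x p (Complex s t) \<partial>lborel) = (\<integral>t. hh x p (Complex \<sigma> t) \<partial>lborel)" by simp
    have "norm (\<integral>t. hh x p (Complex \<sigma> t) \<partial>lborel) \<le> exp (\<sigma> * x) * pi / \<bar>\<sigma>\<bar>"
      using line_bound[of \<sigma> p x] s1 assms by simp
    also have "\<dots> \<le> 1 * pi / (real n + 1)"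
    proof (intro frac_le mult_right_mono)
      show "exp (\<sigma> * x) \<le> 1" using s1 True by (simp add: mult_nonpos_nonneg)
    qed (use s1 in auto)
    finally show ?thesis unfolding eq by simp
  qed
  then have "norm (\<integral>t. hh x p (Complex s t) \<partial>lborel) \<le> 0" by (rule le_zero_seq)
  then show ?thesis using True by simp
next
  case False
  have "norm ((\<integral>t. hh x p (Complex s t) \<partial>lborel) + 2 * pi * cf x p) \<le> pi / (real n + 1)" for n :: nat
  proof -
    define \<sigma> where "\<sigma> = real n + 1"
    have s1: "s < \<sigma>" "\<sigma> \<noteq> 0" "\<sigma> > 0" "\<bar>\<sigma>\<bar> = real n + 1" "\<bar>\<sigma>\<bar> \<ge> 1" using assms unfolding \<sigma>_def by auto
    have "(\<integral>t. hh x p (Complex s t) \<partial>lborel) - (\<integral>t. hh x p (Complex \<sigma> t) \<partial>lborel) = cf x p * of_real (- 2 * pi)"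
      using line_diff[OF s1(1) _ s1(2) assms(2), of x] assms s1 by simp
    then have eq: "(\<integral>t. hh x p (Complex s t) \<partial>lborel) + 2 * pi * cf x p = (\<integral>t. hh x p (Complex \<sigma> t) \<partial>lborel)"
      by (simp add: algebra_simps)
    have "norm (\<integral>t. hh x p (Complex \<sigma> t) \<partial>lborel) \<le> exp (\<sigma> * x) * pi / \<bar>\<sigma>\<bar>"
      using line_bound[of \<sigma> p x] s1 assms by simp
    also have "\<dots> \<le> 1 * pi / (real n + 1)"
    proof (intro frac_le mult_right_mono)
      have "\<sigma> * x \<le> 0" using s1 False by (intro mult_nonneg_nonpos) auto
      then show "exp (\<sigma> * x) \<le> 1" by simp
    qed (use s1 in auto)
    finally show ?thesis unfolding eq by simp
  qed
  then have "norm ((\<integral>t. hh x p (Complex s t) \<partial>lborel) + 2 * pi * cf x p) \<le> 0" by (rule le_zero_seq)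
  then have "(\<integral>t. hh x p (Complex s t) \<partial>lborel) = - 2 * pi * cf x p" by (simp add: eq_neg_iff_add_eq_0)
  also have "\<dots> = of_real (2 * pi / fact p * ((max 0 x) ^ p - x ^ p))"
    using False assms by (simp add: cf_def power_0_left)
  finally show ?thesis .
qed

definition gj :: "int \<Rightarrow> nat \<Rightarrow> real \<Rightarrow> real \<Rightarrow> real \<Rightarrow> complex" where
  "gj j p s x t = exp_trunc j (Complex s t * complex_of_real x) / (Complex s t) ^ (p + 1)"

lemma gj_eq:
  assumes "z \<noteq> 0" "nat (j + 1) \<le> p + 1"
  shows "exp_trunc j (z * complex_of_real x) / z ^ (p + 1)
     = hh x p z - (\<Sum>k<nat (j + 1). cf x k * inverse z ^ (p + 1 - k))"
proof -
  have "exp_trunc j (z * complex_of_real x) / z ^ (p + 1)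
      = hh x p z - (\<Sum>k<nat (j + 1). (z * complex_of_real x) ^ k / of_nat (fact k) / z ^ (p + 1))"
    unfolding exp_trunc_def hh_def by (simp add: diff_divide_distrib sum_divide_distrib)
  also have "(\<Sum>k<nat (j + 1). (z * complex_of_real x) ^ k / of_nat (fact k) / z ^ (p + 1))
      = (\<Sum>k<nat (j + 1). cf x k * inverse z ^ (p + 1 - k))"
  proof (rule sum.cong)
    fix k assume "k \<in> {..<nat (j + 1)}"
    then have "k \<le> p + 1" using assms by simp
    then have e: "z ^ k / z ^ (p+1) = inverse z ^ (p + 1 - k)" using pow_div_inv assms by blast
    have "(z * complex_of_real x) ^ k / of_nat (fact k) / z ^ (p + 1) = cf x k * (z ^ k / z ^ (p+1))"
      unfolding cf_def power_mult_distrib by (simp add: field_simps)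
    then show "(z * complex_of_real x) ^ k / of_nat (fact k) / z ^ (p + 1) = cf x k * inverse z ^ (p + 1 - k)"
      unfolding e .
  qed simp
  finally show ?thesis .
qed

lemma gj_line:
  assumes "s < 0" "p \<ge> 1" "-1 \<le> j" "j \<le> int p - 1"
  shows "integrable lborel (gj j p s x)"
    and "(\<integral>t. gj j p s x t \<partial>lborel) = of_real (2 * pi / fact p * ((max 0 x) ^ p - x ^ p))"
proof -
  have s0: "s \<noteq> 0" using assms by simp
  have nj: "nat (j + 1) \<le> p" using assms by simp
  have eq: "gj j p s x = (\<lambda>t. hh x p (Complex s t) - (\<Sum>k<nat (j + 1). cf x k * inverse (Complex s t) ^ (p + 1 - k)))"
    unfolding gj_def using gj_eq[OF Complex_nz[OF s0]] nj by auto
  have m: "p + 1 - k \<ge> 2" if "k < nat (j + 1)" for k using that nj by simp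
  have qi: "integrable lborel (\<lambda>t. cf x k * inverse (Complex s t) ^ (p + 1 - k))" if "k < nat (j + 1)" for k
    using inv_pow_integrable[OF s0 m[OF that]] by simp
  show "integrable lborel (gj j p s x)"
    unfolding eq using qi hh_integrable[OF s0 assms(2)] by (intro Bochner_Integration.integrable_diff Bochner_Integration.integrable_sum) auto
  have "(\<integral>t. gj j p s x t \<partial>lborel) = (\<integral>t. hh x p (Complex s t) \<partial>lborel)
      - (\<Sum>k<nat (j + 1). (\<integral>t. cf x k * inverse (Complex s t) ^ (p + 1 - k) \<partial>lborel))"
  proof -
    have si: "integrable lborel (\<lambda>t. \<Sum>k<nat (j + 1). cf x k * inverse (Complex s t) ^ (p + 1 - k))"
      using qi by (intro Bochner_Integration.integrable_sum) auto
    have "(\<integral>t. (\<Sum>k<nat (j + 1). cf x k * inverse (Complex s t) ^ (p + 1 - k)) \<partial>lborel)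
        = (\<Sum>k<nat (j + 1). (\<integral>t. cf x k * inverse (Complex s t) ^ (p + 1 - k) \<partial>lborel))"
      using qi by (intro Bochner_Integration.integral_sum) auto
    then show ?thesis
      unfolding eq Bochner_Integration.integral_diff[OF hh_integrable[OF s0 assms(2)] si] by simp
  qed
  also have "(\<Sum>k<nat (j + 1). (\<integral>t. cf x k * inverse (Complex s t) ^ (p + 1 - k) \<partial>lborel)) = 0"
  proof (intro sum.neutral ballI)
    fix k assume "k \<in> {..<nat (j + 1)}"
    then have "(\<integral>t. inverse (Complex s t) ^ (p + 1 - k) \<partial>lborel) = 0"
      using inv_pow_integral_0[OF s0 m] by simp
    then show "(\<integral>t. cf x k * inverse (Complex s t) ^ (p + 1 - k) \<partial>lborel) = 0" by simp
  qed
  finally show "(\<integral>t. gj j p s x t \<partial>lborel) = of_real (2 * pi / fact p * ((max 0 x) ^ p - x ^ p))"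
    using line_value[OF assms(1,2)] by simp
qed

lemma pow_int:
  fixes X :: "'a \<Rightarrow> real"
  assumes "prob_space M" "X \<in> borel_measurable M" "integrable M (\<lambda>\<omega>. \<bar>X \<omega>\<bar> ^ p)" "k \<le> p"
  shows "integrable M (\<lambda>\<omega>. \<bar>X \<omega>\<bar> ^ k)"
proof -
  interpret prob_space M by fact
  show ?thesis
  proof (rule Bochner_Integration.integrable_bound[where f="\<lambda>\<omega>. 1 + \<bar>X \<omega>\<bar> ^ p"])
  show "integrable M (\<lambda>\<omega>. 1 + \<bar>X \<omega>\<bar> ^ p)" using assms(3) by simp
  show "(\<lambda>\<omega>. \<bar>X \<omega>\<bar> ^ k) \<in> borel_measurable M" using assms(2) by measurable
  show "AE \<omega> in M. norm (\<bar>X \<omega>\<bar> ^ k) \<le> norm (1 + \<bar>X \<omega>\<bar> ^ p)"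
  proof (intro AE_I2)
    fix \<omega>
    have "\<bar>X \<omega>\<bar> ^ k \<le> 1 + \<bar>X \<omega>\<bar> ^ p"
    proof (cases "\<bar>X \<omega>\<bar> \<le> 1")
      case True
      then have "\<bar>X \<omega>\<bar> ^ k \<le> 1" by (intro power_le_one) auto
      then show ?thesis by (simp add: add_increasing2)
    next
      case False
      then have "\<bar>X \<omega>\<bar> ^ k \<le> \<bar>X \<omega>\<bar> ^ p" by (intro power_increasing assms(4)) auto
      then show ?thesis by simp
    qed
    then show "norm (\<bar>X \<omega>\<bar> ^ k) \<le> norm (1 + \<bar>X \<omega>\<bar> ^ p)" by simp
  qed
  qed
qed

lemma prod_int:
  fixes f g :: "_ \<Rightarrow> real"
  assumes "prob_space M" "integrable M f" "integrable lborel g"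
  shows "integrable (M \<Otimes>\<^sub>M lborel) (\<lambda>(\<omega>, t). f \<omega> * g t)"
proof -
  interpret M: prob_space M by fact
  interpret P: pair_sigma_finite M lborel ..
  have [measurable]: "f \<in> borel_measurable M" "g \<in> borel_measurable lborel" using assms by auto
  show ?thesis
  proof (rule P.Fubini_integrable)
    show "(\<lambda>(\<omega>, t). f \<omega> * g t) \<in> borel_measurable (M \<Otimes>\<^sub>M lborel)" by measurable
    have "integrable M (\<lambda>x. \<bar>f x\<bar> * (\<integral>y. \<bar>g y\<bar> \<partial>lborel))"
      using assms(2) by (intro integrable_mult_left integrable_abs)
    then show "integrable M (\<lambda>x. \<integral>y. norm (case (x, y) of (\<omega>, t) \<Rightarrow> f \<omega> * g t) \<partial>lborel)"
      by (simp add: abs_mult)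
    show "AE x in M. integrable lborel (\<lambda>y. case (x, y) of (\<omega>, t) \<Rightarrow> f \<omega> * g t)"
      using assms(3) by simp
  qed
qed

lemma exp_trunc_cont: "continuous_on A (exp_trunc j)"
  unfolding exp_trunc_def[abs_def] by (intro continuous_intros) auto

lemma gj_cont:
  assumes "s \<noteq> 0"
  shows "continuous_on UNIV (\<lambda>xt::real \<times> real. gj j p s (fst xt) (snd xt))"
proof -
  have nz: "complex_of_real s + \<i> * complex_of_real b \<noteq> 0" for b
    using assms by (simp add: complex_eq_iff)
  show ?thesis
    unfolding gj_def Complex_eq
    by (intro continuous_intros continuous_on_compose2[OF exp_trunc_cont]) (auto simp: nz)
qed

lemma gj_cnj: "gj j p s x (- t) = cnj (gj j p s x t)"
proof -
  have c: "Complex s (- t) = cnj (Complex s t)" by (simp add: complex_eq_iff)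
  have e: "exp_trunc j (cnj w) = cnj (exp_trunc j w)" for w
    unfolding exp_trunc_def by (simp add: exp_cnj)
  have e1: "cnj (Complex s t) * complex_of_real x = cnj (Complex s t * complex_of_real x)" by simp
  show ?thesis unfolding gj_def c e1 e
    by (subst complex_cnj_power[symmetric], subst complex_cnj_divide[symmetric]) (rule refl)
qed

lemma norm_exp_trunc_le:
  "norm (exp_trunc j w) \<le> exp (Re w) + (\<Sum>k<nat (j + 1). norm w ^ k / fact k)"
proof -
  have "norm (exp_trunc j w) \<le> norm (exp w) + norm (\<Sum>k<nat (j + 1). w ^ k / of_nat (fact k))"
    unfolding exp_trunc_def by (rule norm_triangle_ineq4)
  also have "norm (\<Sum>k<nat (j + 1). w ^ k / of_nat (fact k)) \<le> (\<Sum>k<nat (j + 1). norm w ^ k / fact k)"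
    by (rule order_trans[OF norm_sum]) (simp add: norm_divide norm_power)
  finally show ?thesis by simp
qed

lemma norm_gj_le:
  assumes "s \<noteq> 0" "nat (j + 1) \<le> p + 1"
  shows "norm (gj j p s x t) \<le> exp (s * x) * norm (inverse (Complex s t) ^ (p + 1))
     + (\<Sum>k<nat (j + 1). \<bar>x\<bar> ^ k / fact k * norm (inverse (Complex s t) ^ (p + 1 - k)))"
proof -
  have "gj j p s x t = hh x p (Complex s t) - (\<Sum>k<nat (j + 1). cf x k * inverse (Complex s t) ^ (p + 1 - k))"
    unfolding gj_def by (rule gj_eq[OF Complex_nz[OF assms(1)] assms(2)])
  then have "norm (gj j p s x t) \<le> norm (hh x p (Complex s t)) + norm (\<Sum>k<nat (j + 1). cf x k * inverse (Complex s t) ^ (p + 1 - k))"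
    by (simp add: norm_triangle_ineq4)
  also have "norm (\<Sum>k<nat (j + 1). cf x k * inverse (Complex s t) ^ (p + 1 - k))
     \<le> (\<Sum>k<nat (j + 1). \<bar>x\<bar> ^ k / fact k * norm (inverse (Complex s t) ^ (p + 1 - k)))"
    by (rule order_trans[OF norm_sum]) (simp add: cf_def norm_mult norm_divide norm_power)
  finally show ?thesis unfolding norm_hh by simp
qed

theorem corollary2p2:
  fixes M :: "'a measure" and X :: "'a \<Rightarrow> real"
    and s1 s2 s :: real and p :: nat and j :: int
  assumes "prob_space M"
    and "X \<in> borel_measurable M"
    and "s1 \<le> 0" and "0 \<le> s2"
    and "\<forall>u\<in>{s1..s2}. integrable M (\<lambda>\<omega>. exp (u * X \<omega>))"
    and "p \<ge> 1"
    and "integrable M (\<lambda>\<omega>. \<bar>X \<omega>\<bar> ^ p)"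
    and "s1 \<le> s" and "s < 0"
    and "-1 \<le> j" and "j \<le> int p - 1"
  shows
    "(\<forall>t::real. integrable M (\<lambda>\<omega>. exp_trunc j (Complex s t * complex_of_real (X \<omega>))))
     \<and> integrable lborel
         (\<lambda>t::real. (\<integral>\<omega>. exp_trunc j (Complex s t * complex_of_real (X \<omega>)) \<partial>M)
                     / (Complex s t) ^ (p + 1))
     \<and> complex_of_real (\<integral>\<omega>. (max 0 (X \<omega>)) ^ p \<partial>M)
         = complex_of_real (\<integral>\<omega>. (X \<omega>) ^ p \<partial>M)
           + complex_of_real (fact p / (2 * pi))
             * (\<integral>t. (\<integral>\<omega>. exp_trunc j (Complex s t * complex_of_real (X \<omega>)) \<partial>M)
                     / (Complex s t) ^ (p + 1) \<partial>lborel)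
     \<and> set_integrable lborel {0..}
         (\<lambda>t::real. Re ((\<integral>\<omega>. exp_trunc j (Complex s t * complex_of_real (X \<omega>)) \<partial>M)
                     / (Complex s t) ^ (p + 1)))
     \<and> (\<integral>\<omega>. (max 0 (X \<omega>)) ^ p \<partial>M)
         = (\<integral>\<omega>. (X \<omega>) ^ p \<partial>M)
           + fact p / pi
             * (LINT t:{0..}|lborel. Re ((\<integral>\<omega>. exp_trunc j (Complex s t * complex_of_real (X \<omega>)) \<partial>M)
                     / (Complex s t) ^ (p + 1)))"
proof -
  interpret M: prob_space M by fact
  interpret P: pair_sigma_finite M lborel ..
  note Xm[measurable] = assms(2)
  have s0: "s \<noteq> 0" using assms by simp
  have nj: "nat (j + 1) \<le> p" "nat (j + 1) \<le> p + 1" using assms by auto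
  have eS: "integrable M (\<lambda>\<omega>. exp (s * X \<omega>))" using assms by auto
  have powk: "integrable M (\<lambda>\<omega>. \<bar>X \<omega>\<bar> ^ k)" if "k \<le> p" for k
    using pow_int[OF assms(1,2,7) that] .
  have A: "integrable M (\<lambda>\<omega>. exp_trunc j (Complex s t * complex_of_real (X \<omega>)))" for t
  proof (rule Bochner_Integration.integrable_bound[where f="\<lambda>\<omega>. exp (s * X \<omega>) + (\<Sum>k<nat (j + 1). norm (Complex s t) ^ k * \<bar>X \<omega>\<bar> ^ k / fact k)"])
    show "integrable M (\<lambda>\<omega>. exp (s * X \<omega>) + (\<Sum>k<nat (j + 1). norm (Complex s t) ^ k * \<bar>X \<omega>\<bar> ^ k / fact k))"
      using eS powk nj by (intro Bochner_Integration.integrable_add Bochner_Integration.integrable_sum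
          integrable_divide integrable_mult_right) auto
    show "(\<lambda>\<omega>. exp_trunc j (Complex s t * complex_of_real (X \<omega>))) \<in> borel_measurable M"
      by (rule borel_measurable_continuous_on[OF exp_trunc_cont]) measurable
    show "AE \<omega> in M. norm (exp_trunc j (Complex s t * complex_of_real (X \<omega>)))
        \<le> norm (exp (s * X \<omega>) + (\<Sum>k<nat (j + 1). norm (Complex s t) ^ k * \<bar>X \<omega>\<bar> ^ k / fact k))"
    proof (intro AE_I2)
      fix \<omega>
      have "norm (exp_trunc j (Complex s t * complex_of_real (X \<omega>)))
          \<le> exp (s * X \<omega>) + (\<Sum>k<nat (j + 1). norm (Complex s t) ^ k * \<bar>X \<omega>\<bar> ^ k / fact k)"
        using norm_exp_trunc_le[of j "Complex s t * complex_of_real (X \<omega>)"]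
        by (simp add: norm_mult power_mult_distrib)
      also have "\<dots> \<le> norm (exp (s * X \<omega>) + (\<Sum>k<nat (j + 1). norm (Complex s t) ^ k * \<bar>X \<omega>\<bar> ^ k / fact k))"
        by simp
      finally show "norm (exp_trunc j (Complex s t * complex_of_real (X \<omega>)))
        \<le> norm (exp (s * X \<omega>) + (\<Sum>k<nat (j + 1). norm (Complex s t) ^ k * \<bar>X \<omega>\<bar> ^ k / fact k))" .
    qed
  qed
  define G where "G = (\<lambda>\<omega> t. gj j p s (X \<omega>) t)"
  have Gm: "(\<lambda>(\<omega>, t). G \<omega> t) \<in> borel_measurable (M \<Otimes>\<^sub>M lborel)"
  proof -
    have c: "(\<lambda>xt::real \<times> real. gj j p s (fst xt) (snd xt)) \<in> borel_measurable borel"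
      by (rule borel_measurable_continuous_onI[OF gj_cont[OF s0]])
    have "(\<lambda>(\<omega>, t). (X \<omega>, t)) \<in> measurable (M \<Otimes>\<^sub>M lborel) (borel \<Otimes>\<^sub>M borel)"
      by measurable
    then have "(\<lambda>(\<omega>, t). (X \<omega>, t)) \<in> measurable (M \<Otimes>\<^sub>M lborel) borel"
      by (simp add: borel_prod)
    from measurable_comp[OF this c] show ?thesis
      by (simp add: G_def o_def case_prod_beta)
  qed
  define Bd where "Bd = (\<lambda>(\<omega>, t). exp (s * X \<omega>) * norm (inverse (Complex s t) ^ (p + 1))
     + (\<Sum>k<nat (j + 1). \<bar>X \<omega>\<bar> ^ k / fact k * norm (inverse (Complex s t) ^ (p + 1 - k))))"
  have Bdi: "integrable (M \<Otimes>\<^sub>M lborel) Bd"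
  proof -
    have i1: "integrable (M \<Otimes>\<^sub>M lborel) (\<lambda>(\<omega>, t). exp (s * X \<omega>) * norm (inverse (Complex s t) ^ (p + 1)))"
      using assms by (intro prod_int eS integrable_norm inv_pow_integrable s0) auto
    have i2: "integrable (M \<Otimes>\<^sub>M lborel) (\<lambda>(\<omega>, t). \<bar>X \<omega>\<bar> ^ k / fact k * norm (inverse (Complex s t) ^ (p + 1 - k)))"
      if "k < nat (j + 1)" for k
      using that nj by (intro prod_int integrable_divide powk integrable_norm inv_pow_integrable s0 assms(1)) auto
    have "integrable (M \<Otimes>\<^sub>M lborel) (\<lambda>x. (case x of (\<omega>, t) \<Rightarrow> exp (s * X \<omega>) * norm (inverse (Complex s t) ^ (p + 1)))
       + (\<Sum>k<nat (j + 1). case x of (\<omega>, t) \<Rightarrow> \<bar>X \<omega>\<bar> ^ k / fact k * norm (inverse (Complex s t) ^ (p + 1 - k))))"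
      using i1 i2 by (intro Bochner_Integration.integrable_add Bochner_Integration.integrable_sum) auto
    moreover have "Bd = (\<lambda>x. (case x of (\<omega>, t) \<Rightarrow> exp (s * X \<omega>) * norm (inverse (Complex s t) ^ (p + 1)))
       + (\<Sum>k<nat (j + 1). case x of (\<omega>, t) \<Rightarrow> \<bar>X \<omega>\<bar> ^ k / fact k * norm (inverse (Complex s t) ^ (p + 1 - k))))"
      unfolding Bd_def by (auto simp: fun_eq_iff split: prod.splits)
    ultimately show ?thesis by simp
  qed
  have Gi: "integrable (M \<Otimes>\<^sub>M lborel) (\<lambda>(\<omega>, t). G \<omega> t)"
  proof (rule Bochner_Integration.integrable_bound[OF Bdi Gm])
    show "AE x in M \<Otimes>\<^sub>M lborel. norm (case x of (\<omega>, t) \<Rightarrow> G \<omega> t) \<le> norm (Bd x)"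
    proof (intro AE_I2)
      fix x :: "'a \<times> real"
      obtain \<omega> t where x: "x = (\<omega>, t)" by (cases x)
      have "norm (G \<omega> t) \<le> Bd (\<omega>, t)"
        unfolding G_def Bd_def using norm_gj_le[OF s0 nj(2)] by simp
      also have "\<dots> \<le> norm (Bd (\<omega>, t))" by simp
      finally show "norm (case x of (\<omega>, t) \<Rightarrow> G \<omega> t) \<le> norm (Bd x)" unfolding x by simp
    qed
  qed
  have Feq: "(\<integral>\<omega>. G \<omega> t \<partial>M) = (\<integral>\<omega>. exp_trunc j (Complex s t * complex_of_real (X \<omega>)) \<partial>M) / (Complex s t) ^ (p + 1)" for t
    unfolding G_def gj_def by simp
  have Fi: "integrable lborel (\<lambda>t. \<integral>\<omega>. G \<omega> t \<partial>M)"
    by (rule P.integrable_snd[OF Gi])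
  have B: "integrable lborel (\<lambda>t. (\<integral>\<omega>. exp_trunc j (Complex s t * complex_of_real (X \<omega>)) \<partial>M) / (Complex s t) ^ (p + 1))"
    using Fi unfolding Feq .
  have ip: "integrable M (\<lambda>\<omega>. (max 0 (X \<omega>)) ^ p)" "integrable M (\<lambda>\<omega>. (X \<omega>) ^ p)"
  proof -
    show "integrable M (\<lambda>\<omega>. (max 0 (X \<omega>)) ^ p)"
    proof (rule Bochner_Integration.integrable_bound[OF assms(7)])
      show "AE \<omega> in M. norm ((max 0 (X \<omega>)) ^ p) \<le> norm (\<bar>X \<omega>\<bar> ^ p)"
      proof (intro AE_I2)
        fix \<omega>
        have "(max 0 (X \<omega>)) ^ p \<le> \<bar>X \<omega>\<bar> ^ p" by (intro power_mono) auto
        then show "norm ((max 0 (X \<omega>)) ^ p) \<le> norm (\<bar>X \<omega>\<bar> ^ p)" by simp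
      qed
    qed measurable
    show "integrable M (\<lambda>\<omega>. (X \<omega>) ^ p)"
      by (rule Bochner_Integration.integrable_bound[OF assms(7)]) (auto intro!: AE_I2 simp: power_abs)
  qed
  have "(\<integral>t. (\<integral>\<omega>. G \<omega> t \<partial>M) \<partial>lborel) = (\<integral>\<omega>. (\<integral>t. G \<omega> t \<partial>lborel) \<partial>M)"
    by (rule P.Fubini_integral[OF Gi])
  also have "\<dots> = (\<integral>\<omega>. complex_of_real (2 * pi / fact p * ((max 0 (X \<omega>)) ^ p - (X \<omega>) ^ p)) \<partial>M)"
    unfolding G_def using gj_line(2)[OF assms(9,6,10,11)] by simp
  also have "\<dots> = complex_of_real (\<integral>\<omega>. 2 * pi / fact p * ((max 0 (X \<omega>)) ^ p - (X \<omega>) ^ p) \<partial>M)"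
    by (rule integral_complex_of_real)
  also have "\<dots> = complex_of_real (2 * pi / fact p * ((\<integral>\<omega>. (max 0 (X \<omega>)) ^ p \<partial>M) - (\<integral>\<omega>. (X \<omega>) ^ p \<partial>M)))"
    by (simp only: integral_mult_right_zero Bochner_Integration.integral_diff[OF ip])
  finally have Fub: "(\<integral>t. (\<integral>\<omega>. G \<omega> t \<partial>M) \<partial>lborel)
      = complex_of_real (2 * pi / fact p * ((\<integral>\<omega>. (max 0 (X \<omega>)) ^ p \<partial>M) - (\<integral>\<omega>. (X \<omega>) ^ p \<partial>M)))" .
  define I where "I = (\<integral>t. (\<integral>\<omega>. exp_trunc j (Complex s t * complex_of_real (X \<omega>)) \<partial>M) / (Complex s t) ^ (p + 1) \<partial>lborel)"
  have Ieq: "I = complex_of_real (2 * pi / fact p * ((\<integral>\<omega>. (max 0 (X \<omega>)) ^ p \<partial>M) - (\<integral>\<omega>. (X \<omega>) ^ p \<partial>M)))"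
    unfolding I_def Feq[symmetric] by (rule Fub)
  have C: "complex_of_real (\<integral>\<omega>. (max 0 (X \<omega>)) ^ p \<partial>M)
         = complex_of_real (\<integral>\<omega>. (X \<omega>) ^ p \<partial>M) + complex_of_real (fact p / (2 * pi)) * I"
    unfolding Ieq of_real_mult[symmetric] of_real_add[symmetric] by (simp add: field_simps)
  define f where "f = (\<lambda>t. Re ((\<integral>\<omega>. exp_trunc j (Complex s t * complex_of_real (X \<omega>)) \<partial>M) / (Complex s t) ^ (p + 1)))"
  have fi: "integrable lborel f" unfolding f_def using B by (rule integrable_Re)
  have feven: "f (- t) = f t" for t
  proof -
    have "(\<integral>\<omega>. G \<omega> (- t) \<partial>M) = cnj (\<integral>\<omega>. G \<omega> t \<partial>M)"
      unfolding G_def gj_cnj by simp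
    then show ?thesis unfolding f_def Feq[symmetric] by simp
  qed
  have D: "set_integrable lborel {0..} f"
    unfolding set_integrable_def using fi by (intro integrable_mult_indicator) auto
  have ReI: "Re I = (\<integral>t. f t \<partial>lborel)"
    unfolding I_def f_def using integral_bounded_linear[OF bounded_linear_Re B] by simp
  have split: "(\<integral>t. f t \<partial>lborel) = 2 * (LINT t:{0..}|lborel. f t)"
  proof -
    have i1: "integrable lborel (\<lambda>t. indicator {0..} t * f t)"
      using integrable_mult_indicator[of "{0..}" lborel f] fi by simp
    have i2: "integrable lborel (\<lambda>t. indicator {..<0} t * f t)"
      using integrable_mult_indicator[of "{..<0}" lborel f] fi by simp
    have "(\<integral>t. f t \<partial>lborel) = (\<integral>t. indicator {0..} t * f t + indicator {..<0} t * f t \<partial>lborel)"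
      by (intro Bochner_Integration.integral_cong) (auto simp: indicator_def)
    also have "\<dots> = (\<integral>t. indicator {0..} t * f t \<partial>lborel) + (\<integral>t. indicator {..<0} t * f t \<partial>lborel)"
      by (rule Bochner_Integration.integral_add[OF i1 i2])
    also have "(\<integral>t. indicator {..<0} t * f t \<partial>lborel) = (\<integral>t. indicator {..<0} (0 + (-1) * t) * f (0 + (-1) * t) \<partial>lborel)"
      using lborel_integral_real_affine[of "-1" "\<lambda>t. indicator {..<0} t * f t" 0] by simp
    also have "\<dots> = (\<integral>t. indicator {0..} t * f t \<partial>lborel)"
    proof (rule integral_cong_AE)
      show "(\<lambda>t. indicator {..<0} (0 + (-1) * t) * f (0 + (-1) * t)) \<in> borel_measurable lborel"
        using fi by measurable
      show "(\<lambda>t. indicator {0..} t * f t) \<in> borel_measurable lborel" using fi by measurable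
      show "AE t in lborel. indicator {..<0} (0 + (-1) * t) * f (0 + (-1) * t) = indicator {0..} t * f t"
        using AE_lborel_singleton[of "0::real"] by eventually_elim (auto simp: indicator_def feven)
    qed
    finally show ?thesis unfolding set_lebesgue_integral_def by simp
  qed
  have E: "(\<integral>\<omega>. (max 0 (X \<omega>)) ^ p \<partial>M) = (\<integral>\<omega>. (X \<omega>) ^ p \<partial>M)
      + fact p / pi * (LINT t:{0..}|lborel. f t)"
  proof -
    have "(\<integral>\<omega>. (max 0 (X \<omega>)) ^ p \<partial>M) = Re (complex_of_real (\<integral>\<omega>. (X \<omega>) ^ p \<partial>M) + complex_of_real (fact p / (2 * pi)) * I)"
      unfolding C[symmetric] by simp
    also have "\<dots> = (\<integral>\<omega>. (X \<omega>) ^ p \<partial>M) + fact p / (2 * pi) * Re I" by simp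
    also have "\<dots> = (\<integral>\<omega>. (X \<omega>) ^ p \<partial>M) + fact p / pi * (LINT t:{0..}|lborel. f t)"
      unfolding ReI split by simp
    finally show ?thesis .
  qed
  show ?thesis
    using A B C D E unfolding I_def f_def by blast
qed

end
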